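(* Let $X$ be a pure $d$-dimensional simplicial complex, $0\le k\le d-1$, let $\sigma\in X(k+i)$ with $i\ge1$, and let $c\subseteq\sigma$ with $|c|=k$. Then there exists exactly one face $r$ of $R_k(X)$ with $\bigcup r=\sigma$ and $\bigcap r=c$.
   Context: $X(j)$ = faces with $j+1$ elements. The representation complex $R_k(X)$ has vertex set $X(k)$ and, for $1\le i\le d-k$, $i$-faces the sets $S$ of $i+1$ distinct elements of $X(k)$ with $\bigcup S\in X(i+k)$ and $|\bigcap S|=k$ (plus the empty face). For a face $r$ of dimension $\ge1$, $\bigcap r$ is its core. *)

theory Defs
  imports Main
begin

definition simplicial_complex :: "'a set set \<Rightarrow> bool" where
  "simplicial_complex X \<longleftrightarrow> X \<noteq> {} \<and> (\<forall>F\<in>X. finite F) \<and> (\<forall>F\<in>X. \<forall>G. G \<subseteq> F \<longrightarrow> G \<in> X)"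

definition faces :: "'a set set \<Rightarrow> nat \<Rightarrow> 'a set set" where
  "faces X j = {F \<in> X. card F = j + 1}"

definition pure_complex :: "'a set set \<Rightarrow> nat \<Rightarrow> bool" where
  "pure_complex X d \<longleftrightarrow> simplicial_complex X \<and>
     (\<forall>F\<in>X. card F \<le> d + 1) \<and> (\<forall>F\<in>X. \<exists>G\<in>faces X d. F \<subseteq> G)"

definition rep_complex :: "'a set set \<Rightarrow> nat \<Rightarrow> nat \<Rightarrow> 'a set set set" where
  "rep_complex X d k =
     {{}} \<union> {{v} | v. v \<in> faces X k} \<union>
     {S. \<exists>i. 1 \<le> i \<and> i \<le> d - k \<and> S \<subseteq> faces X k \<and> finite S \<and> card S = i + 1 \<and>
            \<Union>S \<in> faces X (i + k) \<and> card (\<Inter>S) = k}"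

end

theory Submission
  imports Defs
begin

theorem mainTheorem12:
  fixes X :: "'a set set" and d k i :: nat and \<sigma> c :: "'a set"
  assumes "pure_complex X d"
    and "k \<le> d - 1" and "1 \<le> d"
    and "1 \<le> i"
    and "\<sigma> \<in> faces X (k + i)"
    and "c \<subseteq> \<sigma>" and "card c = k"
  shows "\<exists>!r. r \<in> rep_complex X d k \<and> \<Union>r = \<sigma> \<and> \<Inter>r = c"
proof -
  have sX: "\<sigma> \<in> X" and cs: "card \<sigma> = k + i + 1" using assms(5) by (auto simp: faces_def)
  have fs: "finite \<sigma>" using cs by (metis add_is_0 card.infinite zero_neq_one)
  have fc: "finite c" using fs assms(6) finite_subset by blast
  have cd: "card (\<sigma> - c) = i + 1" using card_Diff_subset[OF fc assms(6)] cs assms(7) by simp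
  have cle: "card \<sigma> \<le> d + 1" using assms(1) sX by (auto simp: pure_complex_def)
  have sub: "\<And>F G. F \<in> X \<Longrightarrow> G \<subseteq> F \<Longrightarrow> G \<in> X"
    using assms(1) by (auto simp: pure_complex_def simplicial_complex_def)
  define r0 where "r0 = (\<lambda>x. insert x c) ` (\<sigma> - c)"
  have inj: "inj_on (\<lambda>x. insert x c) (\<sigma> - c)"
    by (rule inj_onI) (metis Diff_iff insert_iff)
  have cr0: "card r0 = i + 1" unfolding r0_def using card_image[OF inj] cd by simp
  have fr0: "finite r0" unfolding r0_def using fs by simp
  have r0k: "r0 \<subseteq> faces X k"
  proof
    fix v assume "v \<in> r0"
    then obtain x where x: "x \<in> \<sigma>" "x \<notin> c" "v = insert x c" unfolding r0_def by auto
    have "v \<subseteq> \<sigma>" using x assms(6) by auto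
    hence "v \<in> X" using sub sX by blast
    moreover have "card v = k + 1" using x fc assms(7) by simp
    ultimately show "v \<in> faces X k" by (simp add: faces_def)
  qed
  have "\<sigma> - c \<noteq> {}" using cd by (metis card.empty nat.distinct(1) Suc_eq_plus1)
  then obtain a where a: "a \<in> \<sigma> - c" by blast
  have U0: "\<Union>r0 = \<sigma>" using a assms(6) unfolding r0_def by blast
  have "card (\<sigma> - c - {a}) = i" using cd a fs by simp
  hence "\<sigma> - c - {a} \<noteq> {}" using assms(4) by (metis card.empty not_one_le_zero)
  then obtain b where b: "b \<in> \<sigma> - c - {a}" by blast
  have I0: "\<Inter>r0 = c"
  proof
    show "c \<subseteq> \<Inter>r0" unfolding r0_def by blast
    show "\<Inter>r0 \<subseteq> c"
    proof
      fix z assume z: "z \<in> \<Inter>r0"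
      have "insert a c \<in> r0" "insert b c \<in> r0" using a b unfolding r0_def by auto
      hence "z \<in> insert a c" "z \<in> insert b c" using z by auto
      thus "z \<in> c" using b by auto
    qed
  qed
  have r0R: "r0 \<in> rep_complex X d k"
    unfolding rep_complex_def
    using r0k fr0 cr0 U0 I0 assms(5) assms(7) cs cle assms(4)
    by (intro UnI2 CollectI exI[of _ i]) (auto simp: add.commute)
  show ?thesis
  proof (rule ex1I[of _ r0])
    show "r0 \<in> rep_complex X d k \<and> \<Union>r0 = \<sigma> \<and> \<Inter>r0 = c" using r0R U0 I0 by simp
  next
    fix r assume r: "r \<in> rep_complex X d k \<and> \<Union>r = \<sigma> \<and> \<Inter>r = c"
    have ne: "\<sigma> \<noteq> {}" using cs by auto
    show "r = r0"
    proof -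
      consider "r = {}" | v where "r = {v}" "v \<in> faces X k"
        | "r \<subseteq> faces X k" "card (\<Inter>r) = k"
        using r unfolding rep_complex_def by blast
      then show ?thesis
      proof cases
        case 1 then show ?thesis using r ne by simp
      next
        case 2 then have "\<sigma> = c" using r by (metis cSup_singleton cInf_singleton)
        then show ?thesis using cs assms(7) by simp
      next
        case 3
        have "r \<subseteq> r0"
        proof
          fix v assume v: "v \<in> r"
          have cv: "c \<subseteq> v" using v r by blast
          have vk: "card v = k + 1" using v 3 by (auto simp: faces_def)
          have fv: "finite v" using vk by (metis card.infinite nat.distinct(1) Suc_eq_plus1)
          have "card (v - c) = 1" using card_Diff_subset[OF fc cv] vk assms(7) by simp
          then obtain x where x: "v - c = {x}" using card_1_singletonE by blast
          have "v = insert x c" using x cv by blast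
          moreover have "x \<in> \<sigma>" "x \<notin> c" using x v r by blast+
          ultimately show "v \<in> r0" unfolding r0_def by blast
        qed
        moreover have "r0 \<subseteq> r"
        proof
          fix w assume "w \<in> r0"
          then obtain x where x: "x \<in> \<sigma>" "x \<notin> c" "w = insert x c" unfolding r0_def by auto
          then obtain v where v: "v \<in> r" "x \<in> v" using r by blast
          have "v \<in> r0" using v \<open>r \<subseteq> r0\<close> by blast
          then obtain y where "y \<notin> c" "v = insert y c" unfolding r0_def by auto
          hence "v = w" using v x by auto
          thus "w \<in> r" using v by simp
        qed
        ultimately show ?thesis by blast
      qed
    qed
  qed
qed

end
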